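(* Let $R$ be a $*$-ring and $P(R)$ its prime radical. Then $R$ is strongly $J$-$*$-clean if and only if $R$ is abelian and $R/P(R)$, with the induced involution $(a+P(R))^*=a^*+P(R)$, is strongly $J$-$*$-clean.
   Context: All rings are associative with identity. A $*$-ring is a ring $R$ with an involution $*$, i.e. a map $a\mapsto a^*$ with $(a+b)^*=a^*+b^*$, $(ab)^*=b^*a^*$, $(a^* )^*=a$. The prime radical $P(R)$ is the intersection of all prime ideals of $R$; it satisfies $P(R)^*\subseteq P(R)$, so $R/P(R)$ inherits an involution. $J(S)$ denotes the Jacobson radical of a ring $S$. A projection is an element $e$ with $e^2=e=e^*$. A $*$-ring $S$ is strongly $J$-$*$-clean if every $a\in S$ can be written $a=e+u$ with $e$ a projection, $u\in J(S)$ and $ae=ea$. A ring is abelian if all its idempotents are central. *)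

theory Defs
  imports "HOL-Algebra.Algebra"
begin

definition star_ring :: "('a, 'b) ring_scheme \<Rightarrow> ('a \<Rightarrow> 'a) \<Rightarrow> bool" where
  "star_ring R s \<longleftrightarrow> ring R \<and>
     (\<forall>a \<in> carrier R. s a \<in> carrier R) \<and>
     (\<forall>a \<in> carrier R. \<forall>b \<in> carrier R. s (a \<oplus>\<^bsub>R\<^esub> b) = s a \<oplus>\<^bsub>R\<^esub> s b) \<and>
     (\<forall>a \<in> carrier R. \<forall>b \<in> carrier R. s (a \<otimes>\<^bsub>R\<^esub> b) = s b \<otimes>\<^bsub>R\<^esub> s a) \<and>
     (\<forall>a \<in> carrier R. s (s a) = a)"

definition nc_prime_ideal :: "('a, 'b) ring_scheme \<Rightarrow> 'a set \<Rightarrow> bool" where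
  "nc_prime_ideal R P \<longleftrightarrow> ideal P R \<and> P \<noteq> carrier R \<and>
     (\<forall>A B. ideal A R \<longrightarrow> ideal B R \<longrightarrow> ideal_prod R A B \<subseteq> P \<longrightarrow> A \<subseteq> P \<or> B \<subseteq> P)"

text \<open>The prime radical: intersection of all prime ideals (the whole ring if there are none).\<close>
definition prime_radical :: "('a, 'b) ring_scheme \<Rightarrow> 'a set" where
  "prime_radical R = carrier R \<inter> \<Inter> {P. nc_prime_ideal R P}"

definition left_ideal :: "('a, 'b) ring_scheme \<Rightarrow> 'a set \<Rightarrow> bool" where
  "left_ideal R L \<longleftrightarrow> additive_subgroup L R \<and>
     (\<forall>r \<in> carrier R. \<forall>x \<in> L. r \<otimes>\<^bsub>R\<^esub> x \<in> L)"

definition maximal_left_ideal :: "('a, 'b) ring_scheme \<Rightarrow> 'a set \<Rightarrow> bool" where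
  "maximal_left_ideal R L \<longleftrightarrow> left_ideal R L \<and> L \<noteq> carrier R \<and>
     (\<forall>L'. left_ideal R L' \<longrightarrow> L \<subseteq> L' \<longrightarrow> L' = L \<or> L' = carrier R)"

definition jacobson_radical :: "('a, 'b) ring_scheme \<Rightarrow> 'a set" where
  "jacobson_radical R = carrier R \<inter> \<Inter> {L. maximal_left_ideal R L}"

definition is_projection :: "('a, 'b) ring_scheme \<Rightarrow> ('a \<Rightarrow> 'a) \<Rightarrow> 'a \<Rightarrow> bool" where
  "is_projection R s e \<longleftrightarrow> e \<in> carrier R \<and> e \<otimes>\<^bsub>R\<^esub> e = e \<and> s e = e"

definition strongly_J_star_clean :: "('a, 'b) ring_scheme \<Rightarrow> ('a \<Rightarrow> 'a) \<Rightarrow> bool" where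
  "strongly_J_star_clean R s \<longleftrightarrow>
     (\<forall>a \<in> carrier R. \<exists>e u. is_projection R s e \<and> u \<in> jacobson_radical R \<and>
        a = e \<oplus>\<^bsub>R\<^esub> u \<and> a \<otimes>\<^bsub>R\<^esub> e = e \<otimes>\<^bsub>R\<^esub> a)"

definition abelian_ring :: "('a, 'b) ring_scheme \<Rightarrow> bool" where
  "abelian_ring R \<longleftrightarrow> (\<forall>e \<in> carrier R. e \<otimes>\<^bsub>R\<^esub> e = e \<longrightarrow>
     (\<forall>x \<in> carrier R. e \<otimes>\<^bsub>R\<^esub> x = x \<otimes>\<^bsub>R\<^esub> e))"

definition quot_star :: "('a, 'b) ring_scheme \<Rightarrow> ('a \<Rightarrow> 'a) \<Rightarrow> 'a set \<Rightarrow> 'a set \<Rightarrow> 'a set" where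
  "quot_star R s N Y = a_r_coset R N (s (SOME x. x \<in> Y))"

end

theory Submission
  imports Defs
begin

lemma (in ring) addsub_iff:
  "additive_subgroup L R \<longleftrightarrow> (L \<subseteq> carrier R \<and> \<zero> \<in> L \<and> (\<forall>x\<in>L. \<forall>y\<in>L. x \<oplus> y \<in> L) \<and> (\<forall>x\<in>L. \<ominus> x \<in> L))"
proof
  assume "additive_subgroup L R"
  then interpret additive_subgroup L R .
  show "L \<subseteq> carrier R \<and> \<zero> \<in> L \<and> (\<forall>x\<in>L. \<forall>y\<in>L. x \<oplus> y \<in> L) \<and> (\<forall>x\<in>L. \<ominus> x \<in> L)"
    using a_subset by auto
next
  assume h: "L \<subseteq> carrier R \<and> \<zero> \<in> L \<and> (\<forall>x\<in>L. \<forall>y\<in>L. x \<oplus> y \<in> L) \<and> (\<forall>x\<in>L. \<ominus> x \<in> L)"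
  show "additive_subgroup L R"
    apply (rule additive_subgroupI)
    apply (rule add.subgroupI)
    using h by (auto simp: a_inv_def)
qed

lemma (in ring) left_ideal_iff:
  "left_ideal R L \<longleftrightarrow> (L \<subseteq> carrier R \<and> \<zero> \<in> L \<and> (\<forall>x\<in>L. \<forall>y\<in>L. x \<oplus> y \<in> L) \<and> (\<forall>x\<in>L. \<ominus> x \<in> L)
     \<and> (\<forall>r \<in> carrier R. \<forall>x \<in> L. r \<otimes> x \<in> L))"
  unfolding left_ideal_def addsub_iff by blast

lemma (in ring) ideal_iff:
  "ideal I R \<longleftrightarrow> (I \<subseteq> carrier R \<and> \<zero> \<in> I \<and> (\<forall>x\<in>I. \<forall>y\<in>I. x \<oplus> y \<in> I) \<and> (\<forall>x\<in>I. \<ominus> x \<in> I)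
     \<and> (\<forall>r \<in> carrier R. \<forall>x \<in> I. r \<otimes> x \<in> I) \<and> (\<forall>r \<in> carrier R. \<forall>x \<in> I. x \<otimes> r \<in> I))"
proof
  assume "ideal I R"
  then interpret ideal I R .
  show "I \<subseteq> carrier R \<and> \<zero> \<in> I \<and> (\<forall>x\<in>I. \<forall>y\<in>I. x \<oplus> y \<in> I) \<and> (\<forall>x\<in>I. \<ominus> x \<in> I)
     \<and> (\<forall>r \<in> carrier R. \<forall>x \<in> I. r \<otimes> x \<in> I) \<and> (\<forall>r \<in> carrier R. \<forall>x \<in> I. x \<otimes> r \<in> I)"
    using a_subset I_l_closed I_r_closed by auto
next
  assume h: "I \<subseteq> carrier R \<and> \<zero> \<in> I \<and> (\<forall>x\<in>I. \<forall>y\<in>I. x \<oplus> y \<in> I) \<and> (\<forall>x\<in>I. \<ominus> x \<in> I)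
     \<and> (\<forall>r \<in> carrier R. \<forall>x \<in> I. r \<otimes> x \<in> I) \<and> (\<forall>r \<in> carrier R. \<forall>x \<in> I. x \<otimes> r \<in> I)"
  then have "additive_subgroup I R" using addsub_iff by blast
  then show "ideal I R"
    using h by (intro ideal.intro ideal_axioms.intro ring_axioms) auto
qed

lemma (in ring) left_ideal_one:
  assumes "left_ideal R L" "\<one> \<in> L" shows "L = carrier R"
  using assms unfolding left_ideal_iff by (metis r_one subsetI subset_antisym)

lemma (in ring) left_ideal_minus:
  assumes "left_ideal R L" "x \<in> L" "y \<in> L" shows "x \<ominus> y \<in> L"
  using assms unfolding left_ideal_iff a_minus_def by blast

lemma (in ring) ideal_minus:
  assumes "ideal L R" "x \<in> L" "y \<in> L" shows "x \<ominus> y \<in> L"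
  using assms unfolding ideal_iff a_minus_def by blast

lemma (in ring) ideal_one_carrier:
  assumes "ideal L R" "\<one> \<in> L" shows "L = carrier R"
  using assms unfolding ideal_iff by (metis r_one subsetI subset_antisym)

lemma (in ring) prime_radical_ideal: "ideal (prime_radical R) R"
proof (cases "{P. nc_prime_ideal R P} = {}")
  case True then show ?thesis by (simp add: prime_radical_def oneideal)
next
  case False
  have all: "\<forall>I\<in>{P. nc_prime_ideal R P}. ideal I R" by (simp add: nc_prime_ideal_def)
  have sub: "\<Inter> {P. nc_prime_ideal R P} \<subseteq> carrier R"
  proof -
    obtain P where "nc_prime_ideal R P" using False by blast
    then have "ideal P R" by (simp add: nc_prime_ideal_def)
    then have "P \<subseteq> carrier R" by (rule ideal.Icarr[THEN subsetI])
    then show ?thesis using \<open>nc_prime_ideal R P\<close> by blast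
  qed
  have "ideal (\<Inter> {P. nc_prime_ideal R P}) R"
    using i_Intersect[of "{P. nc_prime_ideal R P}"] False by (simp add: nc_prime_ideal_def)
  then show ?thesis using sub by (simp add: prime_radical_def Int_absorb1)
qed

locale srg = ring R for R (structure) +
  fixes s :: "'a \<Rightarrow> 'a"
  assumes s_carr[simp]: "a \<in> carrier R \<Longrightarrow> s a \<in> carrier R"
    and s_add: "a \<in> carrier R \<Longrightarrow> b \<in> carrier R \<Longrightarrow> s (a \<oplus> b) = s a \<oplus> s b"
    and s_mult: "a \<in> carrier R \<Longrightarrow> b \<in> carrier R \<Longrightarrow> s (a \<otimes> b) = s b \<otimes> s a"
    and s_s[simp]: "a \<in> carrier R \<Longrightarrow> s (s a) = a"

lemma star_ring_srg: "star_ring R s \<Longrightarrow> srg R s"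
  unfolding star_ring_def srg_def srg_axioms_def by simp

context srg begin

lemma s_zero[simp]: "s \<zero> = \<zero>"
proof -
  have "s \<zero> \<oplus> s \<zero> = s \<zero>" using s_add[of \<zero> \<zero>] by simp
  then show ?thesis using add.l_cancel_one[of "s \<zero>" "s \<zero>"] by simp
qed

lemma s_neg: "a \<in> carrier R \<Longrightarrow> s (\<ominus> a) = \<ominus> s a"
proof -
  assume a: "a \<in> carrier R"
  have "s (\<ominus> a) \<oplus> s a = \<zero>" using s_add[of "\<ominus> a" a] a by (simp add: l_neg)
  then show ?thesis using a by (simp add: minus_equality)
qed

lemma s_minus: "a \<in> carrier R \<Longrightarrow> b \<in> carrier R \<Longrightarrow> s (a \<ominus> b) = s a \<ominus> s b"
  by (simp add: a_minus_def s_add s_neg)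

lemma ideal_spre: assumes "ideal I R" shows "ideal {x\<in>carrier R. s x \<in> I} R"
proof -
  have h: "I \<subseteq> carrier R \<and> \<zero> \<in> I \<and> (\<forall>x\<in>I. \<forall>y\<in>I. x \<oplus> y \<in> I) \<and> (\<forall>x\<in>I. \<ominus> x \<in> I)
     \<and> (\<forall>r \<in> carrier R. \<forall>x \<in> I. r \<otimes> x \<in> I) \<and> (\<forall>r \<in> carrier R. \<forall>x \<in> I. x \<otimes> r \<in> I)"
    using ideal_iff[of I, THEN iffD1, OF assms] .
  show ?thesis unfolding ideal_iff
  proof (intro conjI ballI)
    show "\<zero> \<in> {x \<in> carrier R. s x \<in> I}" using h by simp
  next
    fix x y assume "x \<in> {x \<in> carrier R. s x \<in> I}" "y \<in> {x \<in> carrier R. s x \<in> I}"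
    then show "x \<oplus> y \<in> {x \<in> carrier R. s x \<in> I}" using h by (simp add: s_add)
  next
    fix x assume "x \<in> {x \<in> carrier R. s x \<in> I}"
    then show "\<ominus> x \<in> {x \<in> carrier R. s x \<in> I}" using h by (simp add: s_neg)
  next
    fix r x assume "r \<in> carrier R" "x \<in> {x \<in> carrier R. s x \<in> I}"
    then show "r \<otimes> x \<in> {x \<in> carrier R. s x \<in> I}" using h by (simp add: s_mult)
  next
    fix r x assume "r \<in> carrier R" "x \<in> {x \<in> carrier R. s x \<in> I}"
    then show "x \<otimes> r \<in> {x \<in> carrier R. s x \<in> I}" using h by (simp add: s_mult)
  qed auto
qed

lemma prime_spre: assumes "nc_prime_ideal R Q" shows "nc_prime_ideal R {x\<in>carrier R. s x \<in> Q}"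
proof -
  have Qd: "ideal Q R \<and> Q \<noteq> carrier R \<and> (\<forall>A B. ideal A R \<longrightarrow> ideal B R \<longrightarrow> ideal_prod R A B \<subseteq> Q \<longrightarrow> A \<subseteq> Q \<or> B \<subseteq> Q)"
    using assms unfolding nc_prime_ideal_def .
  have Q: "ideal Q R" "Q \<noteq> carrier R" using Qd by simp_all
  have pr: "\<And>A B. ideal A R \<Longrightarrow> ideal B R \<Longrightarrow> ideal_prod R A B \<subseteq> Q \<Longrightarrow> A \<subseteq> Q \<or> B \<subseteq> Q"
    using Qd by simp
  have Qc: "Q \<subseteq> carrier R" using additive_subgroup.a_subset[OF ideal.axioms(1)[OF Q(1)]] .
  let ?Q = "{x\<in>carrier R. s x \<in> Q}"
  have "?Q \<noteq> carrier R"
  proof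
    assume "?Q = carrier R"
    then have "y \<in> Q" if "y \<in> carrier R" for y
      using that by (metis (mono_tags, lifting) mem_Collect_eq s_carr s_s)
    then have "Q = carrier R" using Qc by blast
    then show False using Q(2) by simp
  qed
  moreover have "A \<subseteq> ?Q \<or> B \<subseteq> ?Q" if A: "ideal A R" and B: "ideal B R" and AB: "ideal_prod R A B \<subseteq> ?Q" for A B
  proof -
    let ?A = "{x\<in>carrier R. s x \<in> A}" and ?B = "{x\<in>carrier R. s x \<in> B}"
    have iA: "ideal ?A R" and iB: "ideal ?B R" using A B ideal_spre by auto
    have "z \<in> Q" if "z \<in> ideal_prod R ?B ?A" for z
      using that
    proof (induct z rule: ideal_prod.induct)
      case (prod b a)
      then have "s a \<otimes> s b \<in> ideal_prod R A B" by (auto intro: ideal_prod.prod)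
      then have "s (s a \<otimes> s b) \<in> Q" using AB by blast
      then show ?case using prod by (simp add: s_mult)
    next
      case (sum s1 s2) then show ?case using Q(1) by (simp add: additive_subgroup.a_closed ideal.axioms(1))
    qed
    then have BA: "?B \<subseteq> Q \<or> ?A \<subseteq> Q" using pr[OF iB iA] by blast
    have AB': "A \<subseteq> carrier R" "B \<subseteq> carrier R"
      using additive_subgroup.a_subset[OF ideal.axioms(1)[OF A]] additive_subgroup.a_subset[OF ideal.axioms(1)[OF B]] by auto
    have key: "W \<subseteq> ?Q" if "W \<subseteq> carrier R" "{x\<in>carrier R. s x \<in> W} \<subseteq> Q" for W :: "'a set"
    proof
      fix a assume a: "a \<in> W"
      then have "s a \<in> {x\<in>carrier R. s x \<in> W}" using that(1) by auto
      then show "a \<in> ?Q" using that a by auto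
    qed
    show ?thesis
    proof (cases "?B \<subseteq> Q")
      case True then show ?thesis using key[OF AB'(2)] by simp
    next
      case False then have "?A \<subseteq> Q" using BA by simp
      then show ?thesis using key[OF AB'(1)] by simp
    qed
  qed
  ultimately show ?thesis using ideal_spre[OF Q(1)] unfolding nc_prime_ideal_def by simp
qed

lemma s_radical: assumes "x \<in> prime_radical R" shows "s x \<in> prime_radical R"
proof -
  have x: "x \<in> carrier R" using assms by (simp add: prime_radical_def)
  have "s x \<in> Q" if "nc_prime_ideal R Q" for Q
  proof -
    have "x \<in> {x\<in>carrier R. s x \<in> Q}" using assms prime_spre[OF that] by (auto simp: prime_radical_def)
    then show ?thesis by simp
  qed
  then show ?thesis using x by (simp add: prime_radical_def)
qed

end

lemma zorn_nonempty:
  assumes "B \<in> A"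
    and ch: "\<And>C. C \<subseteq> A \<Longrightarrow> C \<noteq> {} \<Longrightarrow> (\<forall>U\<in>C. \<forall>V\<in>C. U \<subseteq> V \<or> V \<subseteq> U) \<Longrightarrow> \<Union>C \<in> A"
  shows "\<exists>M\<in>A. B \<subseteq> M \<and> (\<forall>U\<in>A. M \<subseteq> U \<longrightarrow> U = M)"
proof -
  let ?A = "{U\<in>A. B \<subseteq> U}"
  have "\<exists>M\<in>?A. \<forall>U\<in>?A. M \<subseteq> U \<longrightarrow> U = M"
  proof (rule subset_Zorn)
    fix C assume c: "subset.chain ?A C"
    show "\<exists>W\<in>?A. \<forall>U\<in>C. U \<subseteq> W"
    proof (cases "C = {}")
      case True then show ?thesis using assms(1) by auto
    next
      case False
      have "C \<subseteq> A" "\<forall>U\<in>C. \<forall>V\<in>C. U \<subseteq> V \<or> V \<subseteq> U" using c by (auto simp: subset_chain_def)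
      then have "\<Union>C \<in> A" using ch False by blast
      moreover have "B \<subseteq> \<Union>C" using c False unfolding subset_chain_def by blast
      ultimately show ?thesis by blast
    qed
  qed
  then obtain M where M: "M \<in> ?A" "\<forall>U\<in>?A. M \<subseteq> U \<longrightarrow> U = M" by blast
  have "\<forall>U\<in>A. M \<subseteq> U \<longrightarrow> U = M"
  proof (intro ballI impI)
    fix U assume "U \<in> A" "M \<subseteq> U"
    then have "U \<in> ?A" using M(1) by auto
    then show "U = M" using M(2) \<open>M \<subseteq> U\<close> by blast
  qed
  then show ?thesis using M(1) by blast
qed

context ring begin

lemma idealD:
  assumes "ideal I R"
  shows "I \<subseteq> carrier R" "\<zero> \<in> I" "\<And>x y. x \<in> I \<Longrightarrow> y \<in> I \<Longrightarrow> x \<oplus> y \<in> I"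
    "\<And>x. x \<in> I \<Longrightarrow> \<ominus> x \<in> I" "\<And>r x. r \<in> carrier R \<Longrightarrow> x \<in> I \<Longrightarrow> r \<otimes> x \<in> I"
    "\<And>r x. r \<in> carrier R \<Longrightarrow> x \<in> I \<Longrightarrow> x \<otimes> r \<in> I"
  using ideal_iff[of I, THEN iffD1, OF assms] by auto

lemma idealI':
  assumes "I \<subseteq> carrier R" "\<zero> \<in> I" "\<And>x y. x \<in> I \<Longrightarrow> y \<in> I \<Longrightarrow> x \<oplus> y \<in> I"
    "\<And>x. x \<in> I \<Longrightarrow> \<ominus> x \<in> I" "\<And>r x. r \<in> carrier R \<Longrightarrow> x \<in> I \<Longrightarrow> r \<otimes> x \<in> I"
    "\<And>r x. r \<in> carrier R \<Longrightarrow> x \<in> I \<Longrightarrow> x \<otimes> r \<in> I"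
  shows "ideal I R"
  apply (rule ideal_iff[of I, THEN iffD2])
  using assms by auto

lemma left_idealD:
  assumes "left_ideal R I"
  shows "I \<subseteq> carrier R" "\<zero> \<in> I" "\<And>x y. x \<in> I \<Longrightarrow> y \<in> I \<Longrightarrow> x \<oplus> y \<in> I"
    "\<And>x. x \<in> I \<Longrightarrow> \<ominus> x \<in> I" "\<And>r x. r \<in> carrier R \<Longrightarrow> x \<in> I \<Longrightarrow> r \<otimes> x \<in> I"
  using left_ideal_iff[of I, THEN iffD1, OF assms] by auto

lemma left_idealI':
  assumes "I \<subseteq> carrier R" "\<zero> \<in> I" "\<And>x y. x \<in> I \<Longrightarrow> y \<in> I \<Longrightarrow> x \<oplus> y \<in> I"
    "\<And>x. x \<in> I \<Longrightarrow> \<ominus> x \<in> I" "\<And>r x. r \<in> carrier R \<Longrightarrow> x \<in> I \<Longrightarrow> r \<otimes> x \<in> I"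
  shows "left_ideal R I"
  apply (rule left_ideal_iff[of I, THEN iffD2])
  using assms by auto

lemma ideal_left: "ideal I R \<Longrightarrow> left_ideal R I"
  by (rule left_idealI') (auto dest: idealD)

lemma left_ideal_chain:
  assumes "\<And>L. L \<in> C \<Longrightarrow> left_ideal R L" "C \<noteq> {}" "\<forall>U\<in>C. \<forall>V\<in>C. U \<subseteq> V \<or> V \<subseteq> U"
  shows "left_ideal R (\<Union>C)"
proof (rule left_idealI')
  show "\<Union> C \<subseteq> carrier R" using assms(1) left_idealD(1) by blast
  show "\<zero> \<in> \<Union> C" using assms(1,2) left_idealD(2) by blast
  fix x y assume "x \<in> \<Union> C" "y \<in> \<Union> C"
  then obtain U V where XY: "U \<in> C" "V \<in> C" "x \<in> U" "y \<in> V" by blast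
  show "x \<oplus> y \<in> \<Union> C"
  proof (cases "U \<subseteq> V")
    case True then show ?thesis using XY assms(1)[of V] left_idealD(3)[of V x y] by blast
  next
    case False then have "V \<subseteq> U" using assms(3) XY by blast
    then show ?thesis using XY assms(1)[of U] left_idealD(3)[of U x y] by blast
  qed
next
  fix x assume "x \<in> \<Union> C"
  then show "\<ominus> x \<in> \<Union> C" using assms(1) left_idealD(4) by blast
next
  fix r x assume "r \<in> carrier R" "x \<in> \<Union> C"
  then show "r \<otimes> x \<in> \<Union> C" using assms(1) left_idealD(5) by blast
qed

lemma ideal_chain:
  assumes "\<And>L. L \<in> C \<Longrightarrow> ideal L R" "C \<noteq> {}" "\<forall>U\<in>C. \<forall>V\<in>C. U \<subseteq> V \<or> V \<subseteq> U"
  shows "ideal (\<Union>C) R"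
proof -
  have l: "left_ideal R (\<Union>C)" using left_ideal_chain[OF _ assms(2,3)] assms(1) ideal_left by blast
  show ?thesis
  proof (rule idealI')
    show "\<Union> C \<subseteq> carrier R" "\<zero> \<in> \<Union> C" using left_idealD[OF l] by auto
    show "\<And>x y. x \<in> \<Union> C \<Longrightarrow> y \<in> \<Union> C \<Longrightarrow> x \<oplus> y \<in> \<Union> C" using left_idealD[OF l] by auto
    show "\<And>x. x \<in> \<Union> C \<Longrightarrow> \<ominus> x \<in> \<Union> C" using left_idealD[OF l] by auto
    show "\<And>r x. r \<in> carrier R \<Longrightarrow> x \<in> \<Union> C \<Longrightarrow> r \<otimes> x \<in> \<Union> C" using left_idealD[OF l] by auto
    fix r x assume "r \<in> carrier R" "x \<in> \<Union> C"
    then show "x \<otimes> r \<in> \<Union> C" using assms(1) idealD(6) by blast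
  qed
qed

end

context ring begin

lemma J_sub: "jacobson_radical R \<subseteq> carrier R"
  by (auto simp: jacobson_radical_def)

lemma J_in_max: "v \<in> jacobson_radical R \<Longrightarrow> maximal_left_ideal R L \<Longrightarrow> v \<in> L"
  by (auto simp: jacobson_radical_def)

lemma J_left: assumes "v \<in> jacobson_radical R" "r \<in> carrier R" shows "r \<otimes> v \<in> jacobson_radical R"
proof -
  have v: "v \<in> carrier R" using assms J_sub by blast
  have "r \<otimes> v \<in> L" if "maximal_left_ideal R L" for L
  proof -
    have "left_ideal R L" using that by (simp add: maximal_left_ideal_def)
    then show ?thesis using left_idealD(5) assms J_in_max that by blast
  qed
  then show ?thesis using v assms(2) by (simp add: jacobson_radical_def)
qed

lemma max_left_one: "maximal_left_ideal R L \<Longrightarrow> \<one> \<notin> L"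
  unfolding maximal_left_ideal_def using left_ideal_one by blast

lemma principal_left: assumes c: "c \<in> carrier R"
  shows "left_ideal R {r \<otimes> c | r. r \<in> carrier R}"
proof (rule left_idealI')
  show "{r \<otimes> c |r. r \<in> carrier R} \<subseteq> carrier R" using c by auto
  show "\<zero> \<in> {r \<otimes> c |r. r \<in> carrier R}" using c by (auto intro!: exI[of _ \<zero>])
  fix x y assume "x \<in> {r \<otimes> c |r. r \<in> carrier R}" "y \<in> {r \<otimes> c |r. r \<in> carrier R}"
  then obtain a b where "a \<in> carrier R" "b \<in> carrier R" "x = a \<otimes> c" "y = b \<otimes> c" by blast
  then show "x \<oplus> y \<in> {r \<otimes> c |r. r \<in> carrier R}" using c by (auto intro!: exI[of _ "a \<oplus> b"] simp: l_distr)
next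
  fix x assume "x \<in> {r \<otimes> c |r. r \<in> carrier R}"
  then obtain a where "a \<in> carrier R" "x = a \<otimes> c" by blast
  then show "\<ominus> x \<in> {r \<otimes> c |r. r \<in> carrier R}" using c by (auto intro!: exI[of _ "\<ominus> a"] simp: l_minus)
next
  fix t x assume t: "t \<in> carrier R" and "x \<in> {r \<otimes> c |r. r \<in> carrier R}"
  then obtain a where "a \<in> carrier R" "x = a \<otimes> c" by blast
  then show "t \<otimes> x \<in> {r \<otimes> c |r. r \<in> carrier R}" using c t by (auto intro!: exI[of _ "t \<otimes> a"] simp: m_assoc)
qed

lemma J_left_inv: assumes v: "v \<in> jacobson_radical R"
  shows "\<exists>w\<in>carrier R. w \<otimes> (\<one> \<ominus> v) = \<one>"
proof (rule ccontr)
  assume nw: "\<not> ?thesis"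
  have vc: "v \<in> carrier R" using v J_sub by blast
  define c where "c = \<one> \<ominus> v"
  have c: "c \<in> carrier R" using vc by (simp add: c_def)
  define M0 where "M0 = {r \<otimes> c | r. r \<in> carrier R}"
  have M0: "left_ideal R M0" unfolding M0_def using principal_left[OF c] .
  have "\<one> \<notin> M0" using nw by (auto simp: M0_def c_def)
  let ?A = "{L. left_ideal R L \<and> \<one> \<notin> L}"
  have "\<exists>M\<in>?A. M0 \<subseteq> M \<and> (\<forall>U\<in>?A. M \<subseteq> U \<longrightarrow> U = M)"
  proof (rule zorn_nonempty)
    show "M0 \<in> ?A" using M0 \<open>\<one> \<notin> M0\<close> by simp
    fix C assume "C \<subseteq> ?A" "C \<noteq> {}" "\<forall>U\<in>C. \<forall>V\<in>C. U \<subseteq> V \<or> V \<subseteq> U"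
    then show "\<Union>C \<in> ?A" using left_ideal_chain[of C] by auto
  qed
  then obtain M where M: "left_ideal R M" "\<one> \<notin> M" "M0 \<subseteq> M" "\<forall>U\<in>?A. M \<subseteq> U \<longrightarrow> U = M" by blast
  have "maximal_left_ideal R M"
    unfolding maximal_left_ideal_def
  proof (intro conjI allI impI)
    show "left_ideal R M" "M \<noteq> carrier R" using M by auto
    fix L' assume L': "left_ideal R L'" "M \<subseteq> L'"
    show "L' = M \<or> L' = carrier R"
    proof (cases "\<one> \<in> L'")
      case True then show ?thesis using left_ideal_one L'(1) by blast
    next
      case False then show ?thesis using M(4) L' by blast
    qed
  qed
  then have "v \<in> M" using J_in_max v by blast
  moreover have "c \<in> M" using M(3) c by (auto simp: M0_def intro!: exI[of _ \<one>])
  ultimately have "c \<oplus> v \<in> M" using left_idealD(3)[OF M(1)] by blast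
  moreover have "c \<oplus> v = \<one>" using vc by (simp add: c_def a_minus_def a_assoc l_neg)
  ultimately show False using M(2) by simp
qed

lemma J_zero: assumes d: "d \<in> jacobson_radical R" and h: "(\<one> \<ominus> d \<otimes> d) \<otimes> d = \<zero>"
  shows "d = \<zero>"
proof -
  have dc: "d \<in> carrier R" using d J_sub by blast
  have "d \<otimes> d \<in> jacobson_radical R" using J_left[OF d dc] .
  then obtain w where w: "w \<in> carrier R" "w \<otimes> (\<one> \<ominus> d \<otimes> d) = \<one>" using J_left_inv by blast
  have "d = \<one> \<otimes> d" using dc by simp
  also have "\<dots> = (w \<otimes> (\<one> \<ominus> d \<otimes> d)) \<otimes> d" by (simp only: w(2))
  also have "\<dots> = w \<otimes> ((\<one> \<ominus> d \<otimes> d) \<otimes> d)" by (rule m_assoc; use w dc in simp)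
  also have "\<dots> = \<zero>" using h w by simp
  finally show ?thesis .
qed

end

context ring begin

lemma gen_left:
  assumes L: "left_ideal R L" and c: "c \<in> carrier R"
  shows "left_ideal R {l \<oplus> r \<otimes> c | l r. l \<in> L \<and> r \<in> carrier R}"
proof (rule left_idealI')
  note Ld = left_idealD[OF L]
  show "{l \<oplus> r \<otimes> c | l r. l \<in> L \<and> r \<in> carrier R} \<subseteq> carrier R" using c Ld(1) by auto
  show "\<zero> \<in> {l \<oplus> r \<otimes> c | l r. l \<in> L \<and> r \<in> carrier R}" using c Ld(2) by (auto intro!: exI[of _ \<zero>])
  fix x y assume "x \<in> {l \<oplus> r \<otimes> c | l r. l \<in> L \<and> r \<in> carrier R}" "y \<in> {l \<oplus> r \<otimes> c | l r. l \<in> L \<and> r \<in> carrier R}"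
  then obtain l a l' b where h: "l \<in> L" "l' \<in> L" "a \<in> carrier R" "b \<in> carrier R" "x = l \<oplus> a \<otimes> c" "y = l' \<oplus> b \<otimes> c" by blast
  have "x \<oplus> y = (l \<oplus> l') \<oplus> (a \<oplus> b) \<otimes> c" using h c Ld(1) by (simp add: l_distr a_ac subsetD)
  then show "x \<oplus> y \<in> {l \<oplus> r \<otimes> c | l r. l \<in> L \<and> r \<in> carrier R}" using h Ld(3) by blast
next
  note Ld = left_idealD[OF L]
  fix x assume "x \<in> {l \<oplus> r \<otimes> c | l r. l \<in> L \<and> r \<in> carrier R}"
  then obtain l a where h: "l \<in> L" "a \<in> carrier R" "x = l \<oplus> a \<otimes> c" by blast
  have "\<ominus> x = (\<ominus> l) \<oplus> (\<ominus> a) \<otimes> c" using h c Ld(1) by (simp add: minus_add l_minus subsetD)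
  then show "\<ominus> x \<in> {l \<oplus> r \<otimes> c | l r. l \<in> L \<and> r \<in> carrier R}" using h Ld(4) by blast
next
  note Ld = left_idealD[OF L]
  fix t x assume t: "t \<in> carrier R" and "x \<in> {l \<oplus> r \<otimes> c | l r. l \<in> L \<and> r \<in> carrier R}"
  then obtain l a where h: "l \<in> L" "a \<in> carrier R" "x = l \<oplus> a \<otimes> c" by blast
  have "t \<otimes> x = t \<otimes> l \<oplus> (t \<otimes> a) \<otimes> c" using h c t Ld(1) by (simp add: r_distr m_assoc subsetD)
  then show "t \<otimes> x \<in> {l \<oplus> r \<otimes> c | l r. l \<in> L \<and> r \<in> carrier R}" using h t Ld(5) by blast
qed

lemma annih_prime:
  assumes L: "maximal_left_ideal R L"
  shows "nc_prime_ideal R {q\<in>carrier R. \<forall>x\<in>carrier R. q \<otimes> x \<in> L}"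
proof -
  have Ll: "left_ideal R L" and L1: "\<one> \<notin> L" using L max_left_one by (auto simp: maximal_left_ideal_def)
  have Lmax: "\<And>L'. left_ideal R L' \<Longrightarrow> L \<subseteq> L' \<Longrightarrow> L' = L \<or> L' = carrier R"
    using L by (simp add: maximal_left_ideal_def)
  note Ld = left_idealD[OF Ll]
  define Q where "Q = {q\<in>carrier R. \<forall>x\<in>carrier R. q \<otimes> x \<in> L}"
  have QL: "Q \<subseteq> L"
  proof
    fix q assume "q \<in> Q" then have "q \<otimes> \<one> \<in> L" "q \<in> carrier R" unfolding Q_def by blast+
    then show "q \<in> L" by simp
  qed
  have iQ: "ideal Q R"
  proof (rule idealI')
    show "Q \<subseteq> carrier R" by (auto simp: Q_def)
    show "\<zero> \<in> Q" using Ld(2) by (auto simp: Q_def)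
    show "x \<oplus> y \<in> Q" if "x \<in> Q" "y \<in> Q" for x y
      using that Ld(3) by (auto simp: Q_def l_distr)
    show "\<ominus> x \<in> Q" if "x \<in> Q" for x
      using that Ld(4) by (auto simp: Q_def l_minus)
    show "r \<otimes> x \<in> Q" if "r \<in> carrier R" "x \<in> Q" for r x
      using that Ld(5) by (auto simp: Q_def m_assoc)
    show "x \<otimes> r \<in> Q" if "r \<in> carrier R" "x \<in> Q" for r x
      using that by (auto simp: Q_def m_assoc)
  qed
  have "Q \<noteq> carrier R" using QL L1 by auto
  moreover have "A \<subseteq> Q \<or> B \<subseteq> Q" if A: "ideal A R" and B: "ideal B R" and AB: "ideal_prod R A B \<subseteq> Q" for A B
  proof (rule ccontr)
    assume "\<not> (A \<subseteq> Q \<or> B \<subseteq> Q)"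
    then obtain b where b: "b \<in> B" "b \<notin> Q" and nA: "\<not> A \<subseteq> Q" by blast
    have bc: "b \<in> carrier R" using b idealD(1)[OF B] by blast
    then obtain x where x: "x \<in> carrier R" "b \<otimes> x \<notin> L" using b by (auto simp: Q_def)
    define c where "c = b \<otimes> x"
    have c: "c \<in> carrier R" using bc x by (simp add: c_def)
    let ?L2 = "{l \<oplus> r \<otimes> c | l r. l \<in> L \<and> r \<in> carrier R}"
    have L2: "left_ideal R ?L2" using gen_left[OF Ll c] .
    have "L \<subseteq> ?L2"
    proof
      fix l assume "l \<in> L" then have "l = l \<oplus> \<zero> \<otimes> c" "l \<in> carrier R" using c Ld(1) by auto
      then show "l \<in> ?L2" using \<open>l \<in> L\<close> by blast
    qed
    moreover have "c \<in> ?L2"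
    proof -
      have "c = \<zero> \<oplus> \<one> \<otimes> c" using c by simp
      then show ?thesis using Ld(2) by blast
    qed
    ultimately have "?L2 = carrier R" using Lmax[OF L2] x(2) c_def by auto
    then have "\<one> \<in> ?L2" by simp
    then obtain l r where lr: "l \<in> L" "r \<in> carrier R" "\<one> = l \<oplus> r \<otimes> c" by blast
    define \<beta> where "\<beta> = r \<otimes> c"
    have \<beta>B: "\<beta> \<in> B" unfolding \<beta>_def c_def using idealD(5,6)[OF B] b x lr by blast
    have lc: "l \<in> carrier R" using lr Ld(1) by blast
    have "A \<subseteq> Q"
    proof
      fix a assume a: "a \<in> A"
      have ac: "a \<in> carrier R" using a idealD(1)[OF A] by blast
      have "a \<otimes> z \<in> L" if z: "z \<in> carrier R" for z
      proof -
        have bc': "\<beta> \<in> carrier R" using \<beta>B idealD(1)[OF B] by blast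
        have "a \<otimes> z = (a \<otimes> z) \<otimes> \<one>" using ac z by simp
        also have "\<dots> = (a \<otimes> z) \<otimes> l \<oplus> (a \<otimes> z) \<otimes> \<beta>" using lr(3) \<beta>_def ac z lc bc' by (simp add: r_distr)
        also have "(a \<otimes> z) \<otimes> \<beta> = a \<otimes> (z \<otimes> \<beta>)" using ac z bc' by (simp add: m_assoc)
        finally have eq: "a \<otimes> z = (a \<otimes> z) \<otimes> l \<oplus> a \<otimes> (z \<otimes> \<beta>)" .
        have "z \<otimes> \<beta> \<in> B" using idealD(5)[OF B z \<beta>B] .
        then have "a \<otimes> (z \<otimes> \<beta>) \<in> ideal_prod R A B" by (rule ideal_prod.prod[OF a])
        then have "a \<otimes> (z \<otimes> \<beta>) \<in> L" using AB QL by blast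
        moreover have "(a \<otimes> z) \<otimes> l \<in> L" using Ld(5) ac z lr(1) by simp
        ultimately show ?thesis by (subst eq) (rule Ld(3))
      qed
      then show "a \<in> Q" using ac by (simp add: Q_def)
    qed
    then show False using nA by simp
  qed
  ultimately show ?thesis using iQ unfolding nc_prime_ideal_def Q_def by simp
qed

lemma radical_sub_J: "prime_radical R \<subseteq> jacobson_radical R"
proof
  fix x assume x: "x \<in> prime_radical R"
  have xc: "x \<in> carrier R" using x by (simp add: prime_radical_def)
  have "x \<in> L" if L: "maximal_left_ideal R L" for L
  proof -
    have "x \<in> {q\<in>carrier R. \<forall>y\<in>carrier R. q \<otimes> y \<in> L}" using annih_prime[OF L] x unfolding prime_radical_def by blast
    then have "x \<otimes> \<one> \<in> L" by blast
    then show ?thesis using xc by simp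
  qed
  then show "x \<in> jacobson_radical R" using xc by (simp add: jacobson_radical_def)
qed

end

context ring begin

lemma sum_ideal:
  assumes A: "ideal A R" and M: "ideal M R"
  shows "ideal {a \<oplus> m | a m. a \<in> A \<and> m \<in> M} R"
proof (rule idealI')
  note Ad = idealD[OF A] and Md = idealD[OF M]
  show "{a \<oplus> m | a m. a \<in> A \<and> m \<in> M} \<subseteq> carrier R" using Ad(1) Md(1) by auto
  show "\<zero> \<in> {a \<oplus> m | a m. a \<in> A \<and> m \<in> M}" using Ad(2) Md(2) by (auto intro!: exI[of _ \<zero>])
  fix x y assume "x \<in> {a \<oplus> m | a m. a \<in> A \<and> m \<in> M}" "y \<in> {a \<oplus> m | a m. a \<in> A \<and> m \<in> M}"
  then obtain a m a' m' where h: "a \<in> A" "m \<in> M" "a' \<in> A" "m' \<in> M" "x = a \<oplus> m" "y = a' \<oplus> m'" by blast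
  have "x \<oplus> y = (a \<oplus> a') \<oplus> (m \<oplus> m')" using h Ad(1) Md(1) by (simp add: a_ac subsetD)
  then show "x \<oplus> y \<in> {a \<oplus> m | a m. a \<in> A \<and> m \<in> M}" using h Ad(3) Md(3) by blast
next
  note Ad = idealD[OF A] and Md = idealD[OF M]
  fix x assume "x \<in> {a \<oplus> m | a m. a \<in> A \<and> m \<in> M}"
  then obtain a m where h: "a \<in> A" "m \<in> M" "x = a \<oplus> m" by blast
  have "\<ominus> x = (\<ominus> a) \<oplus> (\<ominus> m)" using h Ad(1) Md(1) by (simp add: minus_add subsetD)
  then show "\<ominus> x \<in> {a \<oplus> m | a m. a \<in> A \<and> m \<in> M}" using h Ad(4) Md(4) by blast
next
  note Ad = idealD[OF A] and Md = idealD[OF M]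
  fix r x assume r: "r \<in> carrier R" and "x \<in> {a \<oplus> m | a m. a \<in> A \<and> m \<in> M}"
  then obtain a m where h: "a \<in> A" "m \<in> M" "x = a \<oplus> m" by blast
  have "r \<otimes> x = r \<otimes> a \<oplus> r \<otimes> m" using h r Ad(1) Md(1) by (simp add: r_distr subsetD)
  then show "r \<otimes> x \<in> {a \<oplus> m | a m. a \<in> A \<and> m \<in> M}" using h r Ad(5) Md(5) by blast
next
  note Ad = idealD[OF A] and Md = idealD[OF M]
  fix r x assume r: "r \<in> carrier R" and "x \<in> {a \<oplus> m | a m. a \<in> A \<and> m \<in> M}"
  then obtain a m where h: "a \<in> A" "m \<in> M" "x = a \<oplus> m" by blast
  have "x \<otimes> r = a \<otimes> r \<oplus> m \<otimes> r" using h r Ad(1) Md(1) by (simp add: l_distr subsetD)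
  then show "x \<otimes> r \<in> {a \<oplus> m | a m. a \<in> A \<and> m \<in> M}" using h r Ad(6) Md(6) by blast
qed

lemma radical_nil:
  assumes x: "x \<in> prime_radical R"
  shows "\<exists>n::nat. x [^] n = \<zero>"
proof (rule ccontr)
  assume nn: "\<not> ?thesis"
  have xc: "x \<in> carrier R" using x by (simp add: prime_radical_def)
  let ?A = "{I. ideal I R \<and> (\<forall>n::nat. x [^] n \<notin> I)}"
  have "\<exists>M\<in>?A. {\<zero>} \<subseteq> M \<and> (\<forall>U\<in>?A. M \<subseteq> U \<longrightarrow> U = M)"
  proof (rule zorn_nonempty)
    show "{\<zero>} \<in> ?A" using nn zeroideal by auto
    fix C assume C: "C \<subseteq> ?A" "C \<noteq> {}" "\<forall>U\<in>C. \<forall>V\<in>C. U \<subseteq> V \<or> V \<subseteq> U"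
    have "ideal (\<Union>C) R" using ideal_chain[OF _ C(2,3)] C(1) by blast
    moreover have "\<forall>n::nat. x [^] n \<notin> \<Union>C" using C(1) by blast
    ultimately show "\<Union>C \<in> ?A" by simp
  qed
  then obtain M where M: "ideal M R" "\<And>n::nat. x [^] n \<notin> M" "\<forall>U\<in>?A. M \<subseteq> U \<longrightarrow> U = M" by blast
  note Md = idealD[OF M(1)]
  have "nc_prime_ideal R M"
    unfolding nc_prime_ideal_def
  proof (intro conjI allI impI)
    show "ideal M R" by (rule M(1))
    show "M \<noteq> carrier R" using M(2)[of 0] by auto
    fix A B assume A: "ideal A R" and B: "ideal B R" and AB: "ideal_prod R A B \<subseteq> M"
    show "A \<subseteq> M \<or> B \<subseteq> M"
    proof (rule ccontr)
      assume "\<not> (A \<subseteq> M \<or> B \<subseteq> M)"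
      then have nA: "\<not> A \<subseteq> M" and nB: "\<not> B \<subseteq> M" by auto
      have ext: "\<exists>(n::nat) a m. a \<in> A' \<and> m \<in> M \<and> x [^] n = a \<oplus> m" if A': "ideal A' R" "\<not> A' \<subseteq> M" for A'
      proof -
        let ?S = "{a \<oplus> m | a m. a \<in> A' \<and> m \<in> M}"
        have iS: "ideal ?S R" using sum_ideal[OF A'(1) M(1)] .
        have "M \<subseteq> ?S"
        proof
          fix m assume "m \<in> M" then have "m = \<zero> \<oplus> m" using Md(1) by auto
          then show "m \<in> ?S" using \<open>m \<in> M\<close> idealD(2)[OF A'(1)] by blast
        qed
        moreover have "?S \<noteq> M"
        proof -
          obtain a where a: "a \<in> A'" "a \<notin> M" using A'(2) by blast
          have "a = a \<oplus> \<zero>" using a idealD(1)[OF A'(1)] by auto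
          then have "a \<in> ?S" using a Md(2) by blast
          then show ?thesis using a by blast
        qed
        ultimately have "?S \<notin> ?A" using M(3) by blast
        then have "\<not> (\<forall>n::nat. x [^] n \<notin> ?S)" using iS by simp
        then obtain n :: nat where "x [^] n \<in> ?S" by blast
        then obtain a m where "a \<in> A'" "m \<in> M" "x [^] n = a \<oplus> m" by blast
        then show ?thesis by blast
      qed
      obtain n :: nat and a m where h1: "a \<in> A" "m \<in> M" "x [^] n = a \<oplus> m" using ext[OF A nA] by blast
      obtain k :: nat and b m' where h2: "b \<in> B" "m' \<in> M" "x [^] k = b \<oplus> m'" using ext[OF B nB] by blast
      have ac: "a \<in> carrier R" using h1 idealD(1)[OF A] by blast
      have bc: "b \<in> carrier R" using h2 idealD(1)[OF B] by blast
      have mc: "m \<in> carrier R" "m' \<in> carrier R" using h1 h2 Md(1) by auto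
      have "x [^] (n + k) = x [^] n \<otimes> x [^] k" using xc by (simp add: nat_pow_mult)
      also have "\<dots> = (a \<otimes> b \<oplus> a \<otimes> m') \<oplus> (m \<otimes> b \<oplus> m \<otimes> m')"
        using h1 h2 ac bc mc by (simp add: l_distr r_distr a_ac)
      finally have eq: "x [^] (n + k) = (a \<otimes> b \<oplus> a \<otimes> m') \<oplus> (m \<otimes> b \<oplus> m \<otimes> m')" .
      have "a \<otimes> b \<in> M" using AB ideal_prod.prod[OF h1(1) h2(1)] by blast
      moreover have "a \<otimes> m' \<in> M" using Md(5) ac h2(2) by blast
      moreover have "m \<otimes> b \<in> M" using Md(6) bc h1(2) by blast
      moreover have "m \<otimes> m' \<in> M" using Md(5) mc h2(2) by blast
      ultimately have "x [^] (n + k) \<in> M" unfolding eq by (intro Md(3))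
      then show False using M(2) by blast
    qed
  qed
  then have "x \<in> M" using x by (simp add: prime_radical_def)
  then have "x [^] (1::nat) \<in> M" using xc by simp
  then show False using M(2) by blast
qed

end

lemma (in cring) s2: assumes t: "t \<in> carrier R"
  shows "(t\<otimes>t)\<otimes>(\<one>\<oplus>\<one>\<oplus>\<one> \<ominus> (t\<oplus>t)) \<ominus> \<one> = \<ominus> (((\<one> \<ominus> t)\<otimes>(\<one> \<ominus> t))\<otimes>(\<one> \<oplus> t \<oplus> t))"
  using t by algebra
lemma (in cring) s4: assumes t: "t \<in> carrier R"
  shows "(t\<otimes>t)\<otimes>((\<one> \<ominus> t)\<otimes>(\<one> \<ominus> t)) = (t\<otimes>t \<ominus> t) \<otimes> (t\<otimes>t \<ominus> t)"
  using t by algebra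
lemma (in cring) s5: assumes t: "t \<in> carrier R"
  shows "\<ominus> ((\<one>\<oplus>\<one>\<oplus>\<one> \<ominus> (t\<oplus>t)) \<otimes> (\<one> \<oplus> t \<oplus> t)) = (t\<otimes>t \<ominus> t) \<oplus> (t\<otimes>t \<ominus> t) \<oplus> (t\<otimes>t \<ominus> t) \<oplus> (t\<otimes>t \<ominus> t) \<ominus> (\<one>\<oplus>\<one>\<oplus>\<one>)"
  using t by algebra
lemma (in cring) g1: assumes "g \<in> carrier R" shows "g \<otimes> g \<ominus> g = g \<otimes> (g \<ominus> \<one>)"
  using assms by algebra
lemma (in cring) g2: assumes "A \<in> carrier R" "p \<in> carrier R" "q \<in> carrier R" "r \<in> carrier R"
  shows "(A \<otimes> p) \<otimes> (\<ominus> (q \<otimes> r)) = (A \<otimes> q) \<otimes> (\<ominus> (p \<otimes> r))"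
  using assms by algebra
lemma (in cring) newton1: assumes t: "t \<in> carrier R"
  shows "((t\<otimes>t)\<otimes>(\<one>\<oplus>\<one>\<oplus>\<one> \<ominus> (t\<oplus>t))) \<otimes> ((t\<otimes>t)\<otimes>(\<one>\<oplus>\<one>\<oplus>\<one> \<ominus> (t\<oplus>t))) \<ominus> ((t\<otimes>t)\<otimes>(\<one>\<oplus>\<one>\<oplus>\<one> \<ominus> (t\<oplus>t)))
     = ((t\<otimes>t \<ominus> t) \<otimes> (t\<otimes>t \<ominus> t)) \<otimes> ((t\<otimes>t \<ominus> t) \<oplus> (t\<otimes>t \<ominus> t) \<oplus> (t\<otimes>t \<ominus> t) \<oplus> (t\<otimes>t \<ominus> t) \<ominus> (\<one>\<oplus>\<one>\<oplus>\<one>))"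
  (is "?g \<otimes> ?g \<ominus> ?g = ?rhs")
proof -
  have gc: "?g \<in> carrier R" using t by simp
  have "?g \<otimes> ?g \<ominus> ?g = ?g \<otimes> (?g \<ominus> \<one>)" using g1[OF gc] .
  also have "\<dots> = ((t\<otimes>t)\<otimes>(\<one>\<oplus>\<one>\<oplus>\<one> \<ominus> (t\<oplus>t))) \<otimes> (\<ominus> (((\<one> \<ominus> t)\<otimes>(\<one> \<ominus> t))\<otimes>(\<one> \<oplus> t \<oplus> t)))"
    using s2[OF t] by simp
  also have "\<dots> = ((t\<otimes>t)\<otimes>((\<one> \<ominus> t)\<otimes>(\<one> \<ominus> t))) \<otimes> (\<ominus> ((\<one>\<oplus>\<one>\<oplus>\<one> \<ominus> (t\<oplus>t)) \<otimes> (\<one> \<oplus> t \<oplus> t)))"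
    by (rule g2) (use t in simp_all)
  also have "\<dots> = ?rhs" using s4[OF t] s5[OF t] by simp
  finally show ?thesis .
qed
lemma (in cring) newton2: assumes t: "t \<in> carrier R"
  shows "((t\<otimes>t)\<otimes>(\<one>\<oplus>\<one>\<oplus>\<one> \<ominus> (t\<oplus>t))) \<ominus> t = (t\<otimes>t \<ominus> t) \<otimes> (\<one> \<ominus> (t\<oplus>t))"
  using t by algebra
lemma (in ring) sub_ainv: assumes H: "subring H R" and h: "h \<in> H"
  shows "a_inv (R\<lparr>carrier:=H\<rparr>) h = \<ominus> h"
proof -
  interpret S: ring "R\<lparr>carrier:=H\<rparr>" using subring_is_ring[OF H] .
  have hc: "h \<in> carrier R" using H h subringE(1) by blast
  have "a_inv (R\<lparr>carrier:=H\<rparr>) h \<in> H" using S.add.inv_closed[of h] h by simp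
  moreover have "h \<oplus> a_inv (R\<lparr>carrier:=H\<rparr>) h = \<zero>" using S.r_neg[of h] h by simp
  ultimately show ?thesis using hc H subringE(1) by (metis minus_equality add.m_comm subsetD)
qed
lemma (in ring) sub_aminus: assumes H: "subring H R" and h: "y \<in> H"
  shows "a_minus (R\<lparr>carrier:=H\<rparr>) x y = x \<ominus> y"
  using sub_ainv[OF H h] by (simp add: a_minus_def)

context ring begin

lemma minus_zero_eq: assumes "a \<in> carrier R" "b \<in> carrier R" "a \<ominus> b = \<zero>" shows "a = b"
proof -
  have "a \<oplus> \<ominus> b = \<zero>" using assms by (simp add: a_minus_def)
  then have "\<ominus> (\<ominus> b) = a" using assms by (intro minus_equality) auto
  then show ?thesis using assms by simp
qed

lemma lift_idem:
  assumes I: "ideal I R" and nil: "\<And>y. y \<in> I \<Longrightarrow> \<exists>n::nat. y [^] n = \<zero>"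
    and a: "a \<in> carrier R" and x: "a \<otimes> a \<ominus> a \<in> I"
  shows "\<exists>e\<in>carrier R. e \<otimes> e = e \<and> e \<ominus> a \<in> I"
proof -
  note Id = idealD[OF I]
  define C where "C = {y\<in>carrier R. \<forall>z\<in>carrier R. z \<otimes> a = a \<otimes> z \<longrightarrow> y \<otimes> z = z \<otimes> y}"
  have Cc: "C \<subseteq> carrier R" by (auto simp: C_def)
  have Ccar: "y \<in> C \<Longrightarrow> y \<in> carrier R" for y by (auto simp: C_def)
  have aC: "a \<in> C" using a by (auto simp: C_def)
  have C1: "\<one> \<in> C" by (auto simp: C_def)
  have Cneg: "\<ominus> y \<in> C" if "y \<in> C" for y
    using that by (auto simp: C_def l_minus r_minus)
  have Cmul: "y1 \<otimes> y2 \<in> C" if "y1 \<in> C" "y2 \<in> C" for y1 y2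
  proof -
    have c: "y1 \<in> carrier R" "y2 \<in> carrier R" using that by (auto simp: C_def)
    have "(y1 \<otimes> y2) \<otimes> z = z \<otimes> (y1 \<otimes> y2)" if z: "z \<in> carrier R" "z \<otimes> a = a \<otimes> z" for z
    proof -
      have "(y1 \<otimes> y2) \<otimes> z = y1 \<otimes> (y2 \<otimes> z)" using c z by (simp add: m_assoc)
      also have "\<dots> = y1 \<otimes> (z \<otimes> y2)" using \<open>y2 \<in> C\<close> z by (simp add: C_def)
      also have "\<dots> = (y1 \<otimes> z) \<otimes> y2" using c z by (simp add: m_assoc)
      also have "\<dots> = (z \<otimes> y1) \<otimes> y2" using \<open>y1 \<in> C\<close> z by (simp add: C_def)
      also have "\<dots> = z \<otimes> (y1 \<otimes> y2)" using c z by (simp add: m_assoc)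
      finally show ?thesis .
    qed
    then show ?thesis using c by (simp add: C_def)
  qed
  have Cadd: "y1 \<oplus> y2 \<in> C" if "y1 \<in> C" "y2 \<in> C" for y1 y2
    using that by (auto simp: C_def l_distr r_distr)
  have Cmin: "y1 \<ominus> y2 \<in> C" if "y1 \<in> C" "y2 \<in> C" for y1 y2
    using Cadd[OF that(1) Cneg[OF that(2)]] by (simp add: a_minus_def)
  have comm: "y \<otimes> z = z \<otimes> y" if "y \<in> C" "z \<in> C" for y z
  proof -
    have "z \<otimes> a = a \<otimes> z" using that(2) a by (auto simp: C_def)
    then show ?thesis using that by (auto simp: C_def)
  qed
  have subC: "subring C R" by (rule subringI[OF Cc C1 Cneg Cmul Cadd])
  have cC: "cring (R\<lparr>carrier := C\<rparr>)"
    using subcring_iff[OF Cc] subcringI[OF subC comm] by blast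
  have Cpow: "y [^] (n::nat) \<in> C" if "y \<in> C" for y n
    by (induct n) (use that C1 Cmul in auto)
  define g where "g t = (t\<otimes>t)\<otimes>(\<one>\<oplus>\<one>\<oplus>\<one> \<ominus> (t\<oplus>t))" for t
  define xf where "xf t = t\<otimes>t \<ominus> t" for t
  have gC: "g t \<in> C" if "t \<in> C" for t unfolding g_def using that C1 by (intro Cmul Cmin Cadd) auto
  have xfC: "xf t \<in> C" if "t \<in> C" for t unfolding xf_def using that by (intro Cmul Cmin) auto
  have N1: "g t \<otimes> g t \<ominus> g t = (xf t \<otimes> xf t) \<otimes> (xf t \<oplus> xf t \<oplus> xf t \<oplus> xf t \<ominus> (\<one>\<oplus>\<one>\<oplus>\<one>))" if t: "t \<in> C" for t
    using cring.newton1[OF cC, of t] t C1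
    by (simp add: g_def xf_def sub_aminus[OF subC] Cmul Cmin Cadd)
  have N2: "g t \<ominus> t = xf t \<otimes> (\<one> \<ominus> (t\<oplus>t))" if t: "t \<in> C" for t
    using cring.newton2[OF cC, of t] t C1
    by (simp add: g_def xf_def sub_aminus[OF subC] Cmul Cmin Cadd)
  define x0 where "x0 = xf a"
  have x0I: "x0 \<in> I" using x by (simp add: x0_def xf_def)
  have x0C: "x0 \<in> C" using xfC[OF aC] by (simp add: x0_def)
  have powI: "x0 [^] (Suc m) \<in> I" for m
    using Id(5)[OF _ x0I, of "x0 [^] m"] Ccar[OF Cpow[OF x0C]] by simp
  have step: "(g ^^ k) a \<in> C \<and> (g ^^ k) a \<ominus> a \<in> I \<and> (\<exists>w\<in>C. xf ((g ^^ k) a) = x0 [^] ((2::nat)^k) \<otimes> w)" for k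
  proof (induct k)
    case 0
    have "a \<ominus> a = \<zero>" using a by (simp add: a_minus_def r_neg)
    then show ?case using aC Id(2) C1 Ccar[OF x0C] by (auto simp: x0_def intro!: bexI[of _ \<one>])
  next
    case (Suc k)
    define t where "t = (g ^^ k) a"
    have tC: "t \<in> C" and tI: "t \<ominus> a \<in> I" using Suc by (auto simp: t_def)
    obtain w where w: "w \<in> C" "xf t = x0 [^] ((2::nat)^k) \<otimes> w" using Suc by (auto simp: t_def)
    have tc: "t \<in> carrier R" using Ccar[OF tC] .
    have X: "x0 [^] ((2::nat)^k) \<in> C" using Cpow[OF x0C] .
    have XI: "x0 [^] ((2::nat)^k) \<in> I"
    proof -
      have "(2::nat)^k = Suc ((2::nat)^k - 1)" by simp
      then show ?thesis using powI by metis
    qed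
    have xfI: "xf t \<in> I" using w Id(6)[OF Ccar[OF w(1)] XI] by simp
    have gt: "g t \<in> C" using gC[OF tC] .
    have "g t \<ominus> a = (g t \<ominus> t) \<oplus> (t \<ominus> a)"
      using Ccar[OF gt] tc a by algebra
    moreover have "g t \<ominus> t \<in> I"
      using N2[OF tC] Id(6)[OF _ xfI, of "\<one> \<ominus> (t\<oplus>t)"] tc by simp
    ultimately have I1: "g t \<ominus> a \<in> I" using Id(3) tI by simp
    define c where "c = xf t \<oplus> xf t \<oplus> xf t \<oplus> xf t \<ominus> (\<one>\<oplus>\<one>\<oplus>\<one>)"
    have cC': "c \<in> C" unfolding c_def using xfC[OF tC] C1 by (intro Cmin Cadd) auto
    let ?X = "x0 [^] ((2::nat)^k)"
    have "xf (g t) = (xf t \<otimes> xf t) \<otimes> c" using N1[OF tC] by (simp add: xf_def c_def)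
    also have "\<dots> = ((?X \<otimes> w) \<otimes> (?X \<otimes> w)) \<otimes> c" using w by simp
    also have "\<dots> = (?X \<otimes> ?X) \<otimes> ((w \<otimes> w) \<otimes> c)"
    proof -
      have "(?X \<otimes> w) \<otimes> (?X \<otimes> w) = ?X \<otimes> ((w \<otimes> ?X) \<otimes> w)"
        using Ccar[OF X] Ccar[OF w(1)] by (simp add: m_assoc)
      also have "\<dots> = ?X \<otimes> ((?X \<otimes> w) \<otimes> w)" using comm[OF w(1) X] by simp
      also have "\<dots> = (?X \<otimes> ?X) \<otimes> (w \<otimes> w)"
        using Ccar[OF X] Ccar[OF w(1)] by (simp add: m_assoc)
      finally show ?thesis using Ccar[OF X] Ccar[OF w(1)] Ccar[OF cC'] by (simp add: m_assoc)
    qed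
    also have "?X \<otimes> ?X = x0 [^] ((2::nat)^Suc k)"
      using Ccar[OF x0C] by (simp add: nat_pow_mult[symmetric] mult_2)
    finally have "xf (g t) = x0 [^] ((2::nat)^Suc k) \<otimes> ((w \<otimes> w) \<otimes> c)" .
    moreover have "(w \<otimes> w) \<otimes> c \<in> C" using w(1) cC' Cmul by blast
    ultimately show ?case using gt I1 by (auto simp: t_def)
  qed
  obtain n :: nat where n: "x0 [^] n = \<zero>" using nil[OF x0I] by blast
  have "x0 [^] ((2::nat)^n) = \<zero>"
  proof -
    have "n \<le> (2::nat)^n" using less_exp[of n] by linarith
    then have "x0 [^] ((2::nat)^n) = x0 [^] n \<otimes> x0 [^] ((2::nat)^n - n)"
      using Ccar[OF x0C] by (simp add: nat_pow_mult)
    then show ?thesis using n Ccar[OF x0C] by simp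
  qed
  note z = this
  obtain w where w: "w \<in> C" "xf ((g ^^ n) a) = x0 [^] ((2::nat)^n) \<otimes> w" using step[of n] by blast
  have wc: "w \<in> carrier R" using Ccar[OF w(1)] .
  have xz: "xf ((g ^^ n) a) = \<zero>" unfolding w(2) z using wc by (rule l_null)
  have ec: "(g ^^ n) a \<in> carrier R" using step[of n] Ccar by blast
  have "(g ^^ n) a \<otimes> (g ^^ n) a \<ominus> (g ^^ n) a = \<zero>" using xz unfolding xf_def .
  then have e2: "(g ^^ n) a \<otimes> (g ^^ n) a = (g ^^ n) a"
    by (rule minus_zero_eq[rotated 2]) (use ec in auto)
  have "(g ^^ n) a \<ominus> a \<in> I" using step[of n] by blast
  then show ?thesis using ec e2 by blast
qed

end

context ring_hom_ring begin

lemma hom_minus: "x \<in> carrier R \<Longrightarrow> y \<in> carrier R \<Longrightarrow> h (x \<ominus> y) = h x \<ominus>\<^bsub>S\<^esub> h y"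
  by (simp add: a_minus_def a_minus_def)

lemma kernel_minus:
  assumes "x \<in> carrier R" "y \<in> carrier R" "h x = h y"
  shows "h (x \<ominus> y) = \<zero>\<^bsub>S\<^esub>"
  using assms by (simp add: hom_minus a_minus_def S.r_neg)

lemma preimage_left:
  assumes L: "left_ideal S L"
  shows "left_ideal R {x\<in>carrier R. h x \<in> L}"
proof (rule R.left_idealI')
  note Ld = S.left_idealD[OF L]
  show "{x \<in> carrier R. h x \<in> L} \<subseteq> carrier R" by auto
  show "\<zero> \<in> {x \<in> carrier R. h x \<in> L}" using Ld(2) by simp
  show "x \<oplus> y \<in> {x \<in> carrier R. h x \<in> L}" if "x \<in> {x \<in> carrier R. h x \<in> L}" "y \<in> {x \<in> carrier R. h x \<in> L}" for x y
    using that Ld(3) by simp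
  show "\<ominus> x \<in> {x \<in> carrier R. h x \<in> L}" if "x \<in> {x \<in> carrier R. h x \<in> L}" for x
    using that Ld(4) by simp
  show "r \<otimes> x \<in> {x \<in> carrier R. h x \<in> L}" if "r \<in> carrier R" "x \<in> {x \<in> carrier R. h x \<in> L}" for r x
    using that Ld(5) by simp
qed

lemma image_left:
  assumes surj: "h ` carrier R = carrier S" and L: "left_ideal R L"
  shows "left_ideal S (h ` L)"
proof (rule S.left_idealI')
  note Ld = R.left_idealD[OF L]
  show "h ` L \<subseteq> carrier S" using Ld(1) by auto
  show "\<zero>\<^bsub>S\<^esub> \<in> h ` L" using Ld(2) by (auto intro!: image_eqI[of _ _ \<zero>])
  show "x \<oplus>\<^bsub>S\<^esub> y \<in> h ` L" if xy: "x \<in> h ` L" "y \<in> h ` L" for x y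
  proof -
    obtain a b where "a \<in> L" "b \<in> L" "x = h a" "y = h b" using xy by blast
    moreover have "a \<in> carrier R" "b \<in> carrier R" using \<open>a \<in> L\<close> \<open>b \<in> L\<close> Ld(1) by auto
    ultimately show ?thesis using Ld(3) by (auto intro!: image_eqI[of _ _ "a \<oplus> b"])
  qed
  show "\<ominus>\<^bsub>S\<^esub> x \<in> h ` L" if xy: "x \<in> h ` L" for x
  proof -
    obtain a where "a \<in> L" "x = h a" using xy by blast
    moreover have "a \<in> carrier R" using \<open>a \<in> L\<close> Ld(1) by auto
    ultimately show ?thesis using Ld(4) by (auto intro!: image_eqI[of _ _ "\<ominus> a"])
  qed
  show "r \<otimes>\<^bsub>S\<^esub> x \<in> h ` L" if xy: "r \<in> carrier S" "x \<in> h ` L" for r x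
  proof -
    obtain a where "a \<in> L" "x = h a" using xy by blast
    moreover obtain b where "b \<in> carrier R" "r = h b" using xy(1) surj by blast
    moreover have "a \<in> carrier R" using \<open>a \<in> L\<close> Ld(1) by auto
    ultimately show ?thesis using Ld(5) by (auto intro!: image_eqI[of _ _ "b \<otimes> a"])
  qed
qed

lemma preimage_max:
  assumes surj: "h ` carrier R = carrier S" and L: "maximal_left_ideal S L"
  shows "maximal_left_ideal R {x\<in>carrier R. h x \<in> L}"
proof -
  have Ll: "left_ideal S L" and L1: "\<one>\<^bsub>S\<^esub> \<notin> L" using L S.max_left_one by (auto simp: maximal_left_ideal_def)
  have Lmax: "\<And>L'. left_ideal S L' \<Longrightarrow> L \<subseteq> L' \<Longrightarrow> L' = L \<or> L' = carrier S"
    using L by (simp add: maximal_left_ideal_def)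
  let ?P = "{x\<in>carrier R. h x \<in> L}"
  have Pl: "left_ideal R ?P" using preimage_left[OF Ll] .
  show ?thesis unfolding maximal_left_ideal_def
  proof (intro conjI allI impI)
    show "left_ideal R ?P" by (rule Pl)
    show "?P \<noteq> carrier R"
    proof
      assume "?P = carrier R"
      then have "\<one> \<in> ?P" by simp
      then show False using L1 by simp
    qed
    fix L'' assume L'': "left_ideal R L''" "?P \<subseteq> L''"
    note L''d = R.left_idealD[OF L''(1)]
    have T: "left_ideal S (h ` L'')" using image_left[OF surj L''(1)] .
    have "L \<subseteq> h ` L''"
    proof
      fix y assume y: "y \<in> L"
      then have "y \<in> carrier S" using S.left_idealD(1)[OF Ll] by blast
      then obtain x where "x \<in> carrier R" "y = h x" using surj by blast
      then show "y \<in> h ` L''" using y L''(2) by blast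
    qed
    then have "h ` L'' = L \<or> h ` L'' = carrier S" using Lmax[OF T] by blast
    then show "L'' = ?P \<or> L'' = carrier R"
    proof
      assume "h ` L'' = L"
      then have "L'' \<subseteq> ?P" using L''d(1) by blast
      then show ?thesis using L''(2) by blast
    next
      assume "h ` L'' = carrier S"
      then obtain x where x: "x \<in> L''" "h x = \<one>\<^bsub>S\<^esub>" using S.one_closed by (metis imageE)
      have xc: "x \<in> carrier R" using x L''d(1) by blast
      have "h (\<one> \<ominus> x) = \<zero>\<^bsub>S\<^esub>" using kernel_minus[of \<one> x] x xc by simp
      then have "\<one> \<ominus> x \<in> ?P" using S.left_idealD(2)[OF Ll] xc by simp
      then have "\<one> \<ominus> x \<in> L''" using L''(2) by blast
      then have "(\<one> \<ominus> x) \<oplus> x \<in> L''" using L''d(3) x by blast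
      moreover have "(\<one> \<ominus> x) \<oplus> x = \<one>" using xc by (simp add: a_minus_def R.a_assoc R.l_neg)
      ultimately have "\<one> \<in> L''" by simp
      then show ?thesis using R.left_ideal_one[OF L''(1)] by blast
    qed
  qed
qed

lemma image_max:
  assumes surj: "h ` carrier R = carrier S" and L: "maximal_left_ideal R L"
    and ker: "\<And>x. x \<in> carrier R \<Longrightarrow> h x = \<zero>\<^bsub>S\<^esub> \<Longrightarrow> x \<in> L"
  shows "maximal_left_ideal S (h ` L)"
proof -
  have Ll: "left_ideal R L" and L1: "\<one> \<notin> L" using L R.max_left_one by (auto simp: maximal_left_ideal_def)
  have Lmax: "\<And>L'. left_ideal R L' \<Longrightarrow> L \<subseteq> L' \<Longrightarrow> L' = L \<or> L' = carrier R"
    using L by (simp add: maximal_left_ideal_def)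
  note Ld = R.left_idealD[OF Ll]
  have bk: "x \<in> L" if xh: "x \<in> carrier R" "h x \<in> h ` L" for x
  proof -
    note x = xh
    obtain l where l: "l \<in> L" "h x = h l" using xh by blast
    have lc: "l \<in> carrier R" using l Ld(1) by blast
    have "x \<ominus> l \<in> L" using ker[of "x \<ominus> l"] kernel_minus[OF x(1) lc l(2)] x lc by simp
    then have "(x \<ominus> l) \<oplus> l \<in> L" using Ld(3) l by blast
    moreover have "(x \<ominus> l) \<oplus> l = x" using x lc by (simp add: a_minus_def R.a_assoc R.l_neg)
    ultimately show ?thesis by simp
  qed
  show ?thesis unfolding maximal_left_ideal_def
  proof (intro conjI allI impI)
    show T: "left_ideal S (h ` L)" using image_left[OF surj Ll] .
    show "h ` L \<noteq> carrier S"
    proof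
      assume "h ` L = carrier S"
      then have "\<one> \<in> L" using bk[of \<one>] by simp
      then show False using L1 by simp
    qed
    fix T' assume T': "left_ideal S T'" "h ` L \<subseteq> T'"
    have P: "left_ideal R {x\<in>carrier R. h x \<in> T'}" using preimage_left[OF T'(1)] .
    have "L \<subseteq> {x\<in>carrier R. h x \<in> T'}" using T'(2) Ld(1) by blast
    then have "{x\<in>carrier R. h x \<in> T'} = L \<or> {x\<in>carrier R. h x \<in> T'} = carrier R" using Lmax[OF P] by blast
    then show "T' = h ` L \<or> T' = carrier S"
    proof
      assume eq: "{x\<in>carrier R. h x \<in> T'} = L"
      have "T' \<subseteq> h ` L"
      proof
        fix y assume y: "y \<in> T'"
        then have "y \<in> carrier S" using S.left_idealD(1)[OF T'(1)] by blast
        then obtain x where "x \<in> carrier R" "y = h x" using surj by blast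
        then show "y \<in> h ` L" using y eq by blast
      qed
      then show ?thesis using T'(2) by blast
    next
      assume "{x\<in>carrier R. h x \<in> T'} = carrier R"
      then have "carrier S \<subseteq> T'"
      proof -
        assume a1: "{x\<in>carrier R. h x \<in> T'} = carrier R"
        show ?thesis
        proof
          fix y assume "y \<in> carrier S"
          then obtain x where "x \<in> carrier R" "y = h x" using surj by blast
          then show "y \<in> T'" using a1 by blast
        qed
      qed
      then show ?thesis using S.left_idealD(1)[OF T'(1)] by blast
    qed
  qed
qed

lemma J_image:
  assumes surj: "h ` carrier R = carrier S" and u: "u \<in> jacobson_radical R"
  shows "h u \<in> jacobson_radical S"
proof -
  have uc: "u \<in> carrier R" using u R.J_sub by blast
  have "h u \<in> L" if "maximal_left_ideal S L" for L
    using R.J_in_max[OF u preimage_max[OF surj that]] by simp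
  then show ?thesis using uc by (simp add: jacobson_radical_def)
qed

lemma J_preimage:
  assumes surj: "h ` carrier R = carrier S"
    and ker: "\<And>x. x \<in> carrier R \<Longrightarrow> h x = \<zero>\<^bsub>S\<^esub> \<Longrightarrow> x \<in> jacobson_radical R"
    and u: "u \<in> carrier R" "h u \<in> jacobson_radical S"
  shows "u \<in> jacobson_radical R"
proof -
  have "u \<in> L" if L: "maximal_left_ideal R L" for L
  proof -
    have k: "x \<in> L" if "x \<in> carrier R" "h x = \<zero>\<^bsub>S\<^esub>" for x using ker[OF that] R.J_in_max L by blast
    have M: "maximal_left_ideal S (h ` L)" using image_max[OF surj L k] .
    have "h u \<in> h ` L" using S.J_in_max[OF u(2) M] .
    then obtain l where l: "l \<in> L" "h u = h l" by blast
    have Ld: "L \<subseteq> carrier R" "\<And>x y. x \<in> L \<Longrightarrow> y \<in> L \<Longrightarrow> x \<oplus> y \<in> L"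
      using R.left_idealD[of L] L by (auto simp: maximal_left_ideal_def)
    have lc: "l \<in> carrier R" using l Ld(1) by blast
    have "u \<ominus> l \<in> L" using k[of "u \<ominus> l"] kernel_minus[OF u(1) lc l(2)] u lc by simp
    then have "(u \<ominus> l) \<oplus> l \<in> L" using Ld(2) l by blast
    moreover have "(u \<ominus> l) \<oplus> l = u" using u lc by (simp add: a_minus_def R.a_assoc R.l_neg)
    ultimately show ?thesis by simp
  qed
  then show ?thesis using u(1) by (simp add: jacobson_radical_def)
qed

end

context ring begin

lemma rdist_minus: "x \<in> carrier R \<Longrightarrow> y \<in> carrier R \<Longrightarrow> z \<in> carrier R \<Longrightarrow> x \<otimes> (y \<ominus> z) = x \<otimes> y \<ominus> x \<otimes> z"
  by (simp add: a_minus_def r_distr r_minus)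

lemma ldist_minus: "x \<in> carrier R \<Longrightarrow> y \<in> carrier R \<Longrightarrow> z \<in> carrier R \<Longrightarrow> (y \<ominus> z) \<otimes> x = y \<otimes> x \<ominus> z \<otimes> x"
  by (simp add: a_minus_def l_distr l_minus)

lemma self_minus: "x \<in> carrier R \<Longrightarrow> x \<ominus> x = \<zero>"
  by (simp add: a_minus_def r_neg)

lemma minus_zero': "x \<in> carrier R \<Longrightarrow> x \<ominus> \<zero> = x"
  by (simp add: a_minus_def)

lemma plus_minus_one: "g \<in> carrier R \<Longrightarrow> g \<oplus> (\<one> \<ominus> g) = \<one>"
  using add.m_lcomm[of g \<one> "\<ominus> g"] by (simp add: a_minus_def r_neg)

lemma idem_compl: assumes e: "e \<in> carrier R" and ee: "e \<otimes> e = e"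
  shows "(\<one> \<ominus> e) \<otimes> (\<one> \<ominus> e) = \<one> \<ominus> e" "(\<one> \<ominus> e) \<otimes> e = \<zero>" "e \<otimes> (\<one> \<ominus> e) = \<zero>"
proof -
  show he: "(\<one> \<ominus> e) \<otimes> e = \<zero>" using e by (simp add: ldist_minus ee self_minus)
  show "e \<otimes> (\<one> \<ominus> e) = \<zero>" using e by (simp add: rdist_minus ee self_minus)
  have "(\<one> \<ominus> e) \<otimes> (\<one> \<ominus> e) = (\<one> \<ominus> e) \<otimes> \<one> \<ominus> (\<one> \<ominus> e) \<otimes> e"
    by (rule rdist_minus) (use e in simp_all)
  also have "\<dots> = \<one> \<ominus> e" using e by (simp only: he r_one minus_zero' minus_closed one_closed)
  finally show "(\<one> \<ominus> e) \<otimes> (\<one> \<ominus> e) = \<one> \<ominus> e" .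
qed

lemma plus_minus_cancel: "a \<in> carrier R \<Longrightarrow> b \<in> carrier R \<Longrightarrow> (a \<oplus> b) \<ominus> a = b"
  by algebra

lemma J_neg: assumes "v \<in> jacobson_radical R" shows "\<ominus> v \<in> jacobson_radical R"
proof -
  have v: "v \<in> carrier R" using assms J_sub by blast
  have "(\<ominus> \<one>) \<otimes> v \<in> jacobson_radical R" using J_left[OF assms] by simp
  then show ?thesis using v by (simp add: l_minus)
qed

lemma J_idem_zero: assumes p: "p \<in> jacobson_radical R" and pp: "p \<otimes> p = p" shows "p = \<zero>"
proof -
  have pc: "p \<in> carrier R" using p J_sub by blast
  obtain w where w: "w \<in> carrier R" "w \<otimes> (\<one> \<ominus> p) = \<one>" using J_left_inv[OF p] by blast
  have z: "(\<one> \<ominus> p) \<otimes> p = \<zero>" using pc by (simp add: ldist_minus pp self_minus)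
  have "p = \<one> \<otimes> p" using pc by simp
  also have "\<dots> = (w \<otimes> (\<one> \<ominus> p)) \<otimes> p" by (simp only: w(2))
  also have "\<dots> = w \<otimes> ((\<one> \<ominus> p) \<otimes> p)" by (rule m_assoc; use w pc in simp)
  also have "\<dots> = \<zero>" using z w by simp
  finally show ?thesis .
qed

lemma idem_J_half:
  assumes g: "g \<in> carrier R" and e: "e \<in> carrier R" and gg: "g \<otimes> g = g" and ee: "e \<otimes> e = e"
    and ge: "g \<otimes> e = e \<otimes> g" and d: "g \<otimes> (g \<ominus> e) \<in> jacobson_radical R"
  shows "g = g \<otimes> e"
proof -
  define hh where "hh = \<one> \<ominus> e"
  have hc: "hh \<in> carrier R" using e by (simp add: hh_def)
  have hhg: "hh \<otimes> g = g \<otimes> hh" using g e by (simp add: hh_def ldist_minus rdist_minus ge)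
  have hhh: "hh \<otimes> hh = hh" unfolding hh_def using idem_compl[OF e ee] by simp
  have peq: "g \<otimes> (g \<ominus> e) = g \<otimes> hh" using g e by (simp add: hh_def rdist_minus gg)
  have "(g \<otimes> hh) \<otimes> (g \<otimes> hh) = g \<otimes> ((hh \<otimes> g) \<otimes> hh)" using g hc by (simp add: m_assoc)
  also have "\<dots> = (g \<otimes> g) \<otimes> (hh \<otimes> hh)" using g hc by (simp add: hhg m_assoc)
  also have "\<dots> = g \<otimes> hh" by (simp add: gg hhh)
  finally have ph: "(g \<otimes> hh) \<otimes> (g \<otimes> hh) = g \<otimes> hh" .
  have "g \<otimes> hh \<in> jacobson_radical R" using d unfolding peq .
  then have z: "g \<otimes> hh = \<zero>" using J_idem_zero[OF _ ph] by blast
  have "g \<otimes> hh = g \<ominus> g \<otimes> e" unfolding hh_def using g e by (simp add: rdist_minus)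
  then have "g \<ominus> g \<otimes> e = \<zero>" using z by simp
  then show ?thesis using minus_zero_eq[of g "g \<otimes> e"] g e by simp
qed


lemma idem_J_eq:
  assumes g: "g \<in> carrier R" and e: "e \<in> carrier R" and gg: "g \<otimes> g = g" and ee: "e \<otimes> e = e"
    and ge: "g \<otimes> e = e \<otimes> g" and d: "g \<ominus> e \<in> jacobson_radical R"
  shows "g = e"
proof -
  have 1: "g = g \<otimes> e" using idem_J_half[OF g e gg ee ge J_left[OF d g]] .
  have eq: "\<ominus> (g \<ominus> e) = e \<ominus> g" using g e by algebra
  have d': "e \<ominus> g \<in> jacobson_radical R" using J_neg[OF d] unfolding eq .
  have 2: "e = e \<otimes> g" using idem_J_half[OF e g ee gg ge[symmetric] J_left[OF d' e]] .
  show ?thesis using trans[OF trans[OF 1 ge] 2[symmetric]] .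
qed

end

context srg begin

lemma s_one[simp]: "s \<one> = \<one>"
proof -
  have "s \<one> = s \<one> \<otimes> \<one>" by simp
  also have "\<dots> = s \<one> \<otimes> s (s \<one>)" by simp
  also have "\<dots> = s (s \<one> \<otimes> \<one>)" using s_mult[of "s \<one>" \<one>] by simp
  also have "\<dots> = \<one>" by simp
  finally show ?thesis .
qed

lemma sjc_proj:
  assumes sjc: "strongly_J_star_clean R s" and g: "g \<in> carrier R" and gg: "g \<otimes> g = g"
  shows "s g = g"
proof -
  obtain e u where eu: "is_projection R s e" "u \<in> jacobson_radical R" "g = e \<oplus> u" "g \<otimes> e = e \<otimes> g"
    using sjc g unfolding strongly_J_star_clean_def by blast
  have e: "e \<in> carrier R" "e \<otimes> e = e" "s e = e" using eu(1) by (auto simp: is_projection_def)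
  have uc: "u \<in> carrier R" using eu(2) J_sub by blast
  have "g \<ominus> e = u" unfolding eu(3) using plus_minus_cancel[OF e(1) uc] .
  then have "g = e" using idem_J_eq[OF g e(1) gg e(2) eu(4)] eu(2) by simp
  then show ?thesis using e by simp
qed

lemma sjc_abelian:
  assumes sjc: "strongly_J_star_clean R s"
  shows "abelian_ring R"
  unfolding abelian_ring_def
proof (intro ballI impI)
  fix g x assume g: "g \<in> carrier R" and gg: "g \<otimes> g = g" and x: "x \<in> carrier R"
  define hh where "hh = \<one> \<ominus> g"
  have hc: "hh \<in> carrier R" using g by (simp add: hh_def)
  have sg: "s g = g" using sjc_proj[OF sjc g gg] .
  have sh: "s hh = hh" using g by (simp add: hh_def s_minus sg)
  have gh: "g \<otimes> hh = \<zero>" using g by (simp add: hh_def rdist_minus gg self_minus)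
  have hg: "hh \<otimes> g = \<zero>" using g by (simp add: hh_def ldist_minus gg self_minus)
  have hh2: "hh \<otimes> hh = hh" unfolding hh_def using idem_compl[OF g gg] by simp
  have gph: "g \<oplus> hh = \<one>" using g by (simp add: hh_def plus_minus_one)
  have ggy: "g \<otimes> (g \<otimes> y) = g \<otimes> y" if "y \<in> carrier R" for y using that g by (simp add: m_assoc[symmetric] gg)
  have hhy: "hh \<otimes> (hh \<otimes> y) = hh \<otimes> y" if "y \<in> carrier R" for y using that hc by (simp add: m_assoc[symmetric] hh2)
  have ghy: "g \<otimes> (hh \<otimes> y) = \<zero>" if "y \<in> carrier R" for y using that g hc by (simp add: m_assoc[symmetric] gh)
  have hgy: "hh \<otimes> (g \<otimes> y) = \<zero>" if "y \<in> carrier R" for y using that g hc by (simp add: m_assoc[symmetric] hg)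
  have sxc: "s x \<in> carrier R" using x by simp
  define A where "A = g \<otimes> (x \<otimes> hh)"
  have Ac: "A \<in> carrier R" using g x hc by (simp add: A_def)
  have f1: "(g \<oplus> A) \<otimes> (g \<oplus> A) = g \<oplus> A"
    using g x hc Ac by (simp add: l_distr r_distr A_def m_assoc gg ggy hgy hg)
  have "s (g \<oplus> A) = g \<oplus> A" using sjc_proj[OF sjc _ f1] g Ac by simp
  moreover have "s (g \<oplus> A) = g \<oplus> hh \<otimes> (s x \<otimes> g)"
    using g x hc by (simp add: A_def s_add s_mult sg sh m_assoc)
  ultimately have "g \<oplus> A = g \<oplus> hh \<otimes> (s x \<otimes> g)" by simp
  then have "A = hh \<otimes> (s x \<otimes> g)" using g Ac hc sxc by simp
  then have "g \<otimes> A = \<zero>" using ghy[of "s x \<otimes> g"] sxc g by simp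
  moreover have "g \<otimes> A = A" using ggy[of "x \<otimes> hh"] x hc by (simp add: A_def)
  ultimately have A0: "A = \<zero>" by simp
  have gx: "g \<otimes> x = g \<otimes> (x \<otimes> g)"
  proof -
    have "g \<otimes> x = g \<otimes> (x \<otimes> (g \<oplus> hh))" using x by (simp add: gph)
    also have "\<dots> = g \<otimes> (x \<otimes> g) \<oplus> A" using g x hc by (simp add: A_def r_distr)
    also have "\<dots> = g \<otimes> (x \<otimes> g)" using A0 g x by simp
    finally show ?thesis .
  qed
  define B where "B = hh \<otimes> (x \<otimes> g)"
  have Bc: "B \<in> carrier R" using g x hc by (simp add: B_def)
  have f2: "(g \<oplus> B) \<otimes> (g \<oplus> B) = g \<oplus> B"
    using g x hc Bc by (simp add: l_distr r_distr B_def m_assoc gg ghy)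
  have "s (g \<oplus> B) = g \<oplus> B" using sjc_proj[OF sjc _ f2] g Bc by simp
  moreover have "s (g \<oplus> B) = g \<oplus> g \<otimes> (s x \<otimes> hh)"
    using g x hc by (simp add: B_def s_add s_mult sg sh m_assoc)
  ultimately have "g \<oplus> B = g \<oplus> g \<otimes> (s x \<otimes> hh)" by simp
  then have "B = g \<otimes> (s x \<otimes> hh)" using g Bc hc sxc by simp
  then have "hh \<otimes> B = \<zero>" using hgy[of "s x \<otimes> hh"] sxc hc by simp
  moreover have "hh \<otimes> B = B" using hhy[of "x \<otimes> g"] x g by (simp add: B_def)
  ultimately have B0: "B = \<zero>" by simp
  have xg: "x \<otimes> g = g \<otimes> (x \<otimes> g)"
  proof -
    have "x \<otimes> g = (g \<oplus> hh) \<otimes> (x \<otimes> g)" using x g by (simp add: gph)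
    also have "\<dots> = g \<otimes> (x \<otimes> g) \<oplus> B" using g x hc by (simp add: B_def l_distr)
    also have "\<dots> = g \<otimes> (x \<otimes> g)" using B0 g x by simp
    finally show ?thesis .
  qed
  show "g \<otimes> x = x \<otimes> g" using trans[OF gx xg[symmetric]] .
qed

end

context ring begin

lemma quot_surj: assumes "ideal K R" shows "(+>) K ` carrier R = carrier (R Quot K)"
  by (auto simp: FactRing_def A_RCOSETS_def')

lemma quot_ker: assumes K: "ideal K R" and x: "x \<in> carrier R"
  shows "(K +> x = \<zero>\<^bsub>R Quot K\<^esub>) \<longleftrightarrow> x \<in> K"
proof -
  interpret ideal K R by (rule K)
  show ?thesis
    using rcos_const_imp_mem[OF x] a_rcos_const[of x] by (auto simp: FactRing_def)
qed

lemma quot_eq: assumes K: "ideal K R" and x: "x \<in> carrier R" and y: "y \<in> carrier R"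
  shows "(K +> x = K +> y) \<longleftrightarrow> x \<ominus> y \<in> K"
proof -
  interpret H: ring_hom_ring R "R Quot K" "(+>) K" using ideal.rcos_ring_hom_ring[OF K] .
  show ?thesis
  proof
    assume "K +> x = K +> y"
    then have "K +> (x \<ominus> y) = \<zero>\<^bsub>R Quot K\<^esub>" by (rule H.kernel_minus[OF x y])
    then show "x \<ominus> y \<in> K" using quot_ker[OF K, of "x \<ominus> y"] x y by simp
  next
    assume "x \<ominus> y \<in> K"
    then have "K +> (x \<ominus> y) = \<zero>\<^bsub>R Quot K\<^esub>" using quot_ker[OF K, of "x \<ominus> y"] x y by simp
    then have "(K +> x) \<ominus>\<^bsub>R Quot K\<^esub> (K +> y) = \<zero>\<^bsub>R Quot K\<^esub>" using H.hom_minus[OF x y] by simp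
    moreover have "K +> x \<in> carrier (R Quot K)" "K +> y \<in> carrier (R Quot K)" using x y by simp_all
    ultimately show "K +> x = K +> y" using H.S.minus_zero_eq by blast
  qed
qed

end

context srg begin

lemma quot_star_eq:
  assumes x: "x \<in> carrier R"
  shows "quot_star R s (prime_radical R) (prime_radical R +> x) = prime_radical R +> s x"
proof -
  let ?K = "prime_radical R"
  have K: "ideal ?K R" by (rule prime_radical_ideal)
  interpret ideal ?K R by (rule K)
  define y where "y = (SOME y. y \<in> ?K +> x)"
  have "x \<in> ?K +> x" using a_rcos_self[OF x] .
  then have y: "y \<in> ?K +> x" unfolding y_def by (rule someI)
  have yc: "y \<in> carrier R" using a_elemrcos_carrier[OF x y] .
  have "?K +> x = ?K +> y" using a_repr_independence'[OF y x] .
  then have "x \<ominus> y \<in> ?K" using quot_eq[OF K x yc] by simp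
  then have "s (x \<ominus> y) \<in> ?K" by (rule s_radical)
  then have "s x \<ominus> s y \<in> ?K" using x yc by (simp add: s_minus)
  then have "?K +> s x = ?K +> s y" using quot_eq[OF K] x yc by simp
  then show ?thesis by (simp add: quot_star_def y_def)
qed

theorem main:
  "strongly_J_star_clean R s \<longleftrightarrow>
     abelian_ring R \<and> strongly_J_star_clean (R Quot (prime_radical R)) (quot_star R s (prime_radical R))"
proof -
  let ?K = "prime_radical R"
  let ?S = "R Quot ?K"
  let ?qs = "quot_star R s ?K"
  have K: "ideal ?K R" by (rule prime_radical_ideal)
  interpret H: ring_hom_ring R ?S "(+>) ?K" using ideal.rcos_ring_hom_ring[OF K] .
  have surj: "(+>) ?K ` carrier R = carrier ?S" using quot_surj[OF K] .
  have Kc: "?K \<subseteq> carrier R" using idealD(1)[OF K] .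
  show ?thesis
  proof
    assume sjc: "strongly_J_star_clean R s"
    have ab: "abelian_ring R" using sjc_abelian[OF sjc] .
    have "strongly_J_star_clean ?S ?qs"
      unfolding strongly_J_star_clean_def
    proof
      fix A assume "A \<in> carrier ?S"
      then obtain a where a: "a \<in> carrier R" "A = ?K +> a" using surj by blast
      obtain e u where eu: "is_projection R s e" "u \<in> jacobson_radical R" "a = e \<oplus> u" "a \<otimes> e = e \<otimes> a"
        using sjc a(1) unfolding strongly_J_star_clean_def by blast
      have e: "e \<in> carrier R" "e \<otimes> e = e" "s e = e" using eu(1) by (auto simp: is_projection_def)
      have uc: "u \<in> carrier R" using eu(2) J_sub by blast
      have "is_projection ?S ?qs (?K +> e)"
        unfolding is_projection_def
      proof (intro conjI)
        show "?K +> e \<in> carrier ?S" using e(1) by simp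
        show "(?K +> e) \<otimes>\<^bsub>?S\<^esub> (?K +> e) = ?K +> e" using e H.hom_mult[of e e] by simp
        show "?qs (?K +> e) = ?K +> e" using quot_star_eq[OF e(1)] e(3) by simp
      qed
      moreover have "?K +> u \<in> jacobson_radical ?S" using H.J_image[OF surj eu(2)] .
      moreover have "A = (?K +> e) \<oplus>\<^bsub>?S\<^esub> (?K +> u)" using a eu(3) e(1) uc by simp
      moreover have "A \<otimes>\<^bsub>?S\<^esub> (?K +> e) = (?K +> e) \<otimes>\<^bsub>?S\<^esub> A"
        using a eu(4) e(1) H.hom_mult[of a e] H.hom_mult[of e a] by simp
      ultimately show "\<exists>E U. is_projection ?S ?qs E \<and> U \<in> jacobson_radical ?S \<and>
          A = E \<oplus>\<^bsub>?S\<^esub> U \<and> A \<otimes>\<^bsub>?S\<^esub> E = E \<otimes>\<^bsub>?S\<^esub> A" by blast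
    qed
    then show "abelian_ring R \<and> strongly_J_star_clean ?S ?qs" using ab by blast
  next
    assume h: "abelian_ring R \<and> strongly_J_star_clean ?S ?qs"
    have ab: "\<And>g x. g \<in> carrier R \<Longrightarrow> g \<otimes> g = g \<Longrightarrow> x \<in> carrier R \<Longrightarrow> g \<otimes> x = x \<otimes> g"
      using h unfolding abelian_ring_def by blast
    have qc: "\<forall>A\<in>carrier ?S. \<exists>E U. is_projection ?S ?qs E \<and> U \<in> jacobson_radical ?S \<and>
          A = E \<oplus>\<^bsub>?S\<^esub> U \<and> A \<otimes>\<^bsub>?S\<^esub> E = E \<otimes>\<^bsub>?S\<^esub> A"
      using h unfolding strongly_J_star_clean_def by blast
    show "strongly_J_star_clean R s"
      unfolding strongly_J_star_clean_def
    proof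
      fix a assume a: "a \<in> carrier R"
      have "?K +> a \<in> carrier ?S" using a by simp
      then obtain E U where EU: "is_projection ?S ?qs E" "U \<in> jacobson_radical ?S"
        "?K +> a = E \<oplus>\<^bsub>?S\<^esub> U" using qc by blast
      have Ec: "E \<in> carrier ?S" and EE: "E \<otimes>\<^bsub>?S\<^esub> E = E" and qE: "?qs E = E"
        using EU(1) by (auto simp: is_projection_def)
      obtain c where c: "c \<in> carrier R" "E = ?K +> c" using Ec surj by (metis imageE)
      have "?K +> (c \<otimes> c) = ?K +> c" using EE c H.hom_mult[of c c] by simp
      then have cc: "c \<otimes> c \<ominus> c \<in> ?K" using quot_eq[OF K, of "c \<otimes> c" c] c by blast
      obtain e where e: "e \<in> carrier R" "e \<otimes> e = e" "e \<ominus> c \<in> ?K"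
        using lift_idem[OF K radical_nil c(1) cc] by blast
      have eE: "?K +> e = E" using quot_eq[OF K e(1) c(1)] e(3) c(2) by simp
      have "?K +> s c = ?K +> c" using qE c quot_star_eq[OF c(1)] by simp
      moreover have "s (e \<ominus> c) \<in> ?K" using s_radical[OF e(3)] .
      then have "s e \<ominus> s c \<in> ?K" using e c by (simp add: s_minus)
      then have "?K +> s e = ?K +> s c" using quot_eq[OF K] e c by simp
      ultimately have "?K +> s e = ?K +> e" using eE c(2) by simp
      then have "s e \<ominus> e \<in> ?K" using quot_eq[OF K] e by simp
      then have dJ: "s e \<ominus> e \<in> jacobson_radical R" by (rule subsetD[OF radical_sub_J])
      have se: "s e \<in> carrier R" "s e \<otimes> s e = s e" using e by (simp_all add: s_mult[symmetric])
      have "e \<otimes> s e = s e \<otimes> e" using ab[OF e(1) e(2) se(1)] .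
      then have see: "s e = e" using idem_J_eq[OF se(1) e(1) se(2) e(2) _ dJ] by simp
      define u where "u = a \<ominus> e"
      have uc: "u \<in> carrier R" using a e by (simp add: u_def)
      have "?K +> u = (?K +> a) \<ominus>\<^bsub>?S\<^esub> (?K +> e)" using H.hom_minus a e by (simp add: u_def)
      also have "\<dots> = (E \<oplus>\<^bsub>?S\<^esub> U) \<ominus>\<^bsub>?S\<^esub> E" using EU(3) eE by simp
      also have "\<dots> = U"
      proof -
        have Uc: "U \<in> carrier ?S" using EU(2) H.S.J_sub by blast
        show ?thesis by (rule H.S.plus_minus_cancel[OF Ec Uc])
      qed
      finally have "?K +> u \<in> jacobson_radical ?S" using EU(2) by simp
      moreover have ker: "x \<in> jacobson_radical R" if "x \<in> carrier R" "?K +> x = \<zero>\<^bsub>?S\<^esub>" for x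
      proof -
        have "x \<in> ?K" using quot_ker[OF K that(1)] that(2) by simp
        then show ?thesis by (rule subsetD[OF radical_sub_J])
      qed
      ultimately have uJ: "u \<in> jacobson_radical R"
        using H.J_preimage[OF surj _ uc] by blast
      have "e \<oplus> (a \<ominus> e) = a" using a e(1) by algebra
      then have "a = e \<oplus> u" by (simp add: u_def)
      moreover have "is_projection R s e" using e see by (simp add: is_projection_def)
      moreover have "a \<otimes> e = e \<otimes> a" using ab[OF e(1) e(2) a] by simp
      ultimately show "\<exists>e u. is_projection R s e \<and> u \<in> jacobson_radical R \<and> a = e \<oplus> u \<and> a \<otimes> e = e \<otimes> a"
        using uJ by blast
    qed
  qed
qed

end

theorem corollary3p9:
  fixes R :: "('a, 'b) ring_scheme" and s :: "'a \<Rightarrow> 'a"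
  assumes "star_ring R s"
  shows "strongly_J_star_clean R s \<longleftrightarrow>
           abelian_ring R \<and>
           strongly_J_star_clean (R Quot (prime_radical R)) (quot_star R s (prime_radical R))"
  using srg.main[OF star_ring_srg[OF assms]] .

end
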